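(* Let $k\ge2$, $n\ge1$ be integers. Let $\bar{\mathcal{P}}$ and $\bar{\mathcal{P}}_p=\bar{\mathcal{P}}+\delta\bar{\mathcal{P}}$ in $\mathbb{R}^{[k,n]}$ be columnwise-substochastic tensors, and let $\mathbf{v}$ and $\mathbf{v}_p=\mathbf{v}+\delta\mathbf{v}$ in $\mathbb{R}^n$ be stochastic vectors. Let $\alpha\in[0,1)$ be such that $\varsigma:=(2k-3)\alpha(1-\alpha)^{-\frac{k-2}{k-1}}<1$, and let $\Delta:=\{\mathbf{y}\in\mathbb{R}^n_+:\mathbf{e}^T\mathbf{y}\le(1-\alpha)^{-\frac{1}{k-1}}\}$. Suppose $\mathbf{y}\in\Delta$ and $\mathbf{y}_p=\mathbf{y}+\delta\mathbf{y}\in\Delta$ satisfy $$(\mathbf{e}^T\mathbf{y})^{k-2}\mathbf{y}-\alpha\bar{\mathcal{P}}\mathbf{y}^{k-1}=\mathbf{v}\quad\text{and}\quad(\mathbf{e}^T\mathbf{y}_p)^{k-2}\mathbf{y}_p-\alpha\bar{\mathcal{P}}_p\mathbf{y}_p^{k-1}=\mathbf{v}_p.$$ Then $$\|\delta\mathbf{y}\|_1\le\frac{2k-3}{(k-1)(1-\varsigma)}\left(\frac{\alpha}{1-\alpha}\|\mathbf{R}(\delta\bar{\mathcal{P}})\|_1+\|\delta\mathbf{v}\|_1\right).$$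
   Context: For $\mathcal{P}\in\mathbb{R}^{[k,n]}$ (real tensors of order $k$, dimension $n$) and $\mathbf{y}\in\mathbb{R}^n$, $(\mathcal{P}\mathbf{y}^{k-1})_i=\sum_{i_2,\dots,i_k}p_{i i_2\dots i_k}y_{i_2}\cdots y_{i_k}$. $\bar{\mathcal{P}}$ is columnwise-substochastic if its entries are nonnegative and $\sum_{i}\bar p_{i i_2\dots i_k}\le1$ for all $i_2,\dots,i_k$. $\mathbf{e}$ is the all-ones vector; a stochastic vector is nonnegative with entries summing to $1$. $\mathbf{R}(\mathcal{P})\in\mathbb{R}^{n\times n^{k-1}}$ is the mode-1 unfolding of $\mathcal{P}$: $[\mathbf{R}(\mathcal{P})]_{i\ell}=p_{ij_2\dots j_k}$ with $\ell=j_2+(j_3-1)n+\cdots+(j_k-1)n^{k-2}$. For a matrix $M$, $\|M\|_1$ is the induced $1$-norm, i.e. the maximum absolute column sum. *)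

theory Defs
  imports "HOL-Analysis.Analysis"
begin

text \<open>Conventions: indices are 0-based, ranging over {0..<n}.
  A real tensor of order k and dimension n is a function from index lists
  (of length k, entries < n) to reals; only such arguments matter.
  Vectors in R^n are functions nat => real (only indices < n matter).\<close>

type_synonym tensor = "nat list \<Rightarrow> real"
type_synonym vec = "nat \<Rightarrow> real"

definition idx_tuples :: "nat \<Rightarrow> nat \<Rightarrow> nat list set" where
  "idx_tuples m n = {js. length js = m \<and> set js \<subseteq> {..<n}}"

definition tensor_apply :: "nat \<Rightarrow> nat \<Rightarrow> tensor \<Rightarrow> vec \<Rightarrow> vec" where
  "tensor_apply k n P y i =
     (\<Sum>js\<in>idx_tuples (k - 1) n. P (i # js) * (\<Prod>j\<leftarrow>js. y j))"

definition tensor_add :: "tensor \<Rightarrow> tensor \<Rightarrow> tensor" where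
  "tensor_add P Q = (\<lambda>is. P is + Q is)"

definition colwise_substochastic :: "nat \<Rightarrow> nat \<Rightarrow> tensor \<Rightarrow> bool" where
  "colwise_substochastic k n P \<longleftrightarrow>
     (\<forall>js\<in>idx_tuples (k - 1) n.
        (\<forall>i<n. P (i # js) \<ge> 0) \<and> (\<Sum>i<n. P (i # js)) \<le> 1)"

definition stochastic_vec :: "nat \<Rightarrow> vec \<Rightarrow> bool" where
  "stochastic_vec n v \<longleftrightarrow> (\<forall>i<n. v i \<ge> 0) \<and> (\<Sum>i<n. v i) = 1"

definition vnorm1 :: "nat \<Rightarrow> vec \<Rightarrow> real" where
  "vnorm1 n x = (\<Sum>i<n. \<bar>x i\<bar>)"

definition esum :: "nat \<Rightarrow> vec \<Rightarrow> real" where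
  "esum n x = (\<Sum>i<n. x i)"

text \<open>Decoding of the (0-based) column index l of the mode-1 unfolding:
  l = j_2 + j_3 n + ... + j_k n^(k-2), so j_{m+2} = (l div n^m) mod n.\<close>
definition unfold_col :: "nat \<Rightarrow> nat \<Rightarrow> nat \<Rightarrow> nat list" where
  "unfold_col k n l = map (\<lambda>m. (l div n ^ m) mod n) [0..<k - 1]"

definition unfold1 :: "nat \<Rightarrow> nat \<Rightarrow> tensor \<Rightarrow> nat \<Rightarrow> nat \<Rightarrow> real" where
  "unfold1 k n P i l = P (i # unfold_col k n l)"

definition mat_norm1 :: "nat \<Rightarrow> nat \<Rightarrow> (nat \<Rightarrow> nat \<Rightarrow> real) \<Rightarrow> real" where
  "mat_norm1 r c M = Max ((\<lambda>l. \<Sum>i<r. \<bar>M i l\<bar>) ` {..<c})"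

end

theory Submission
  imports Defs
begin

lemma tuples_finite: "finite (idx_tuples L n)"
proof -
  have "idx_tuples L n = {xs. set xs \<subseteq> {..<n} \<and> length xs = L}"
    unfolding idx_tuples_def by auto
  thus ?thesis using finite_lists_length_eq[of "{..<n}" L] by simp
qed

lemma tuples_0: "idx_tuples 0 n = {[]}"
  unfolding idx_tuples_def by auto

lemma tuples_Suc: "idx_tuples (Suc L) n = (\<lambda>(j,js). j#js) ` ({..<n} \<times> idx_tuples L n)"
proof (rule set_eqI)
  fix xs show "xs \<in> idx_tuples (Suc L) n \<longleftrightarrow> xs \<in> (\<lambda>(j,js). j#js) ` ({..<n} \<times> idx_tuples L n)"
    unfolding idx_tuples_def by (cases xs) auto
qed

lemma sum_tuples_Suc:
  "(\<Sum>js\<in>idx_tuples (Suc L) n. f js) = (\<Sum>j<n. \<Sum>js\<in>idx_tuples L n. f (j#js))"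
proof -
  have inj: "inj_on (\<lambda>(j,js). j#js) ({..<n} \<times> idx_tuples L n)"
    by (auto simp: inj_on_def)
  have "(\<Sum>js\<in>idx_tuples (Suc L) n. f js) = (\<Sum>p\<in>{..<n} \<times> idx_tuples L n. f ((\<lambda>(j,js). j#js) p))"
    unfolding tuples_Suc by (rule sum.reindex[OF inj, unfolded comp_def])
  also have "\<dots> = (\<Sum>j<n. \<Sum>js\<in>idx_tuples L n. f (j#js))"
    by (simp add: sum.cartesian_product split_def)
  finally show ?thesis .
qed

lemma sum_prod_tuples:
  "(\<Sum>js\<in>idx_tuples L n. (\<Prod>j\<leftarrow>js. u j)) = (\<Sum>i<n. u i) ^ L" for u :: "nat \<Rightarrow> real"
proof (induction L)
  case 0 then show ?case by (simp add: tuples_0)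
next
  case (Suc L)
  have "(\<Sum>js\<in>idx_tuples (Suc L) n. (\<Prod>j\<leftarrow>js. u j)) = (\<Sum>j<n. u j * (\<Sum>js\<in>idx_tuples L n. (\<Prod>j\<leftarrow>js. u j)))"
    unfolding sum_tuples_Suc by (simp add: sum_distrib_left)
  also have "\<dots> = (\<Sum>i<n. u i) ^ Suc L" using Suc by (simp add: sum_distrib_right[symmetric])
  finally show ?case .
qed

lemma prod_nonneg_tuples:
  assumes "\<forall>i<n. u i \<ge> (0::real)" "js \<in> idx_tuples L n"
  shows "(\<Prod>j\<leftarrow>js. u j) \<ge> 0"
  using assms unfolding idx_tuples_def
  by (induction js arbitrary: L) (auto)

lemma diff_tuples:
  fixes u v :: "nat \<Rightarrow> real"
  assumes u0: "\<forall>i<n. u i \<ge> 0" and v0: "\<forall>i<n. v i \<ge> 0"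
    and su: "(\<Sum>i<n. u i) \<le> B" and sv: "(\<Sum>i<n. v i) \<le> B"
  shows "(\<Sum>js\<in>idx_tuples (Suc L) n. \<bar>(\<Prod>j\<leftarrow>js. u j) - (\<Prod>j\<leftarrow>js. v j)\<bar>)
          \<le> real (Suc L) * B ^ L * (\<Sum>i<n. \<bar>u i - v i\<bar>)"
proof (induction L)
  case 0
  then show ?case by (simp add: sum_tuples_Suc tuples_0)
next
  case (Suc L)
  define D where "D = (\<Sum>i<n. \<bar>u i - v i\<bar>)"
  have D0: "D \<ge> 0" unfolding D_def by (simp add: sum_nonneg)
  have B0: "B \<ge> 0" using su sum_nonneg[of "{..<n}" u] u0 by force
  have "(\<Sum>js\<in>idx_tuples (Suc (Suc L)) n. \<bar>(\<Prod>j\<leftarrow>js. u j) - (\<Prod>j\<leftarrow>js. v j)\<bar>)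
     = (\<Sum>j<n. \<Sum>js\<in>idx_tuples (Suc L) n. \<bar>u j * (\<Prod>j\<leftarrow>js. u j) - v j * (\<Prod>j\<leftarrow>js. v j)\<bar>)"
    by (simp add: sum_tuples_Suc)
  also have "\<dots> \<le> (\<Sum>j<n. \<Sum>js\<in>idx_tuples (Suc L) n. u j * \<bar>(\<Prod>j\<leftarrow>js. u j) - (\<Prod>j\<leftarrow>js. v j)\<bar> + \<bar>u j - v j\<bar> * (\<Prod>j\<leftarrow>js. v j))"
  proof (intro sum_mono)
    fix j js assume j: "j \<in> {..<n}" and js: "js \<in> idx_tuples (Suc L) n"
    have pv: "(\<Prod>j\<leftarrow>js. v j) \<ge> 0" using prod_nonneg_tuples[OF v0 js] .
    have "u j * (\<Prod>j\<leftarrow>js. u j) - v j * (\<Prod>j\<leftarrow>js. v j) = u j * ((\<Prod>j\<leftarrow>js. u j) - (\<Prod>j\<leftarrow>js. v j)) + (u j - v j) * (\<Prod>j\<leftarrow>js. v j)"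
      by (simp add: algebra_simps)
    also have "\<bar>\<dots>\<bar> \<le> u j * \<bar>(\<Prod>j\<leftarrow>js. u j) - (\<Prod>j\<leftarrow>js. v j)\<bar> + \<bar>u j - v j\<bar> * (\<Prod>j\<leftarrow>js. v j)"
      using u0 j pv by (simp add: abs_mult abs_triangle_ineq order_trans[OF abs_triangle_ineq])
    finally show "\<bar>u j * (\<Prod>j\<leftarrow>js. u j) - v j * (\<Prod>j\<leftarrow>js. v j)\<bar> \<le> u j * \<bar>(\<Prod>j\<leftarrow>js. u j) - (\<Prod>j\<leftarrow>js. v j)\<bar> + \<bar>u j - v j\<bar> * (\<Prod>j\<leftarrow>js. v j)" .
  qed
  also have "\<dots> = (\<Sum>j<n. u j) * (\<Sum>js\<in>idx_tuples (Suc L) n. \<bar>(\<Prod>j\<leftarrow>js. u j) - (\<Prod>j\<leftarrow>js. v j)\<bar>)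
      + D * (\<Sum>i<n. v i) ^ Suc L"
  proof -
    have "(\<Sum>j<n. \<Sum>js\<in>idx_tuples (Suc L) n. \<bar>u j - v j\<bar> * (\<Prod>j\<leftarrow>js. v j))
       = (\<Sum>j<n. \<bar>u j - v j\<bar> * (\<Sum>js\<in>idx_tuples (Suc L) n. (\<Prod>j\<leftarrow>js. v j)))"
      by (simp add: sum_distrib_left)
    also have "\<dots> = D * (\<Sum>i<n. v i) ^ Suc L"
      by (simp add: sum_prod_tuples D_def sum_distrib_right)
    finally have 1: "(\<Sum>j<n. \<Sum>js\<in>idx_tuples (Suc L) n. \<bar>u j - v j\<bar> * (\<Prod>j\<leftarrow>js. v j)) = D * (\<Sum>i<n. v i) ^ Suc L" .
    have 2: "(\<Sum>j<n. \<Sum>js\<in>idx_tuples (Suc L) n. u j * \<bar>(\<Prod>j\<leftarrow>js. u j) - (\<Prod>j\<leftarrow>js. v j)\<bar>)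
      = (\<Sum>j<n. u j * (\<Sum>js\<in>idx_tuples (Suc L) n. \<bar>(\<Prod>j\<leftarrow>js. u j) - (\<Prod>j\<leftarrow>js. v j)\<bar>))"
      by (simp add: sum_distrib_left)
    also have "\<dots> = (\<Sum>j<n. u j) * (\<Sum>js\<in>idx_tuples (Suc L) n. \<bar>(\<Prod>j\<leftarrow>js. u j) - (\<Prod>j\<leftarrow>js. v j)\<bar>)"
      by (simp add: sum_distrib_right)
    finally have 2: "(\<Sum>j<n. \<Sum>js\<in>idx_tuples (Suc L) n. u j * \<bar>(\<Prod>j\<leftarrow>js. u j) - (\<Prod>j\<leftarrow>js. v j)\<bar>)
      = (\<Sum>j<n. u j) * (\<Sum>js\<in>idx_tuples (Suc L) n. \<bar>(\<Prod>j\<leftarrow>js. u j) - (\<Prod>j\<leftarrow>js. v j)\<bar>)" .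
    show ?thesis unfolding sum.distrib 1 2 ..
  qed
  also have "\<dots> \<le> B * (real (Suc L) * B ^ L * D) + D * B ^ Suc L"
  proof (intro add_mono mult_mono)
    show "(\<Sum>js\<in>idx_tuples (Suc L) n. \<bar>(\<Prod>j\<leftarrow>js. u j) - (\<Prod>j\<leftarrow>js. v j)\<bar>) \<le> real (Suc L) * B ^ L * D"
      using Suc D_def by simp
    show "(\<Sum>i<n. v i) ^ Suc L \<le> B ^ Suc L"
      by (rule power_mono[OF sv]) (use v0 in \<open>auto intro: sum_nonneg\<close>)
  qed (use su B0 D0 u0 v0 in \<open>auto intro!: sum_nonneg mult_nonneg_nonneg zero_le_power\<close>)
  also have "\<dots> = real (Suc (Suc L)) * B ^ Suc L * D" by (simp add: algebra_simps)
  finally show ?case unfolding D_def .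
qed

lemma amgm_aux:
  fixes a b :: real assumes "a \<ge> 0" "b \<ge> 0"
  shows "real m * b ^ (Suc m) - real (Suc m) * b ^ m * a + a ^ Suc m \<ge> 0"
proof (induction m)
  case 0 then show ?case by simp
next
  case (Suc m)
  have "real (Suc m) * b ^ (Suc (Suc m)) - real (Suc (Suc m)) * b ^ (Suc m) * a + a ^ Suc (Suc m)
    = a * (real m * b ^ (Suc m) - real (Suc m) * b ^ m * a + a ^ Suc m) + real (Suc m) * b ^ m * (b - a)^2"
    by (simp add: algebra_simps power2_eq_square)
  also have "\<dots> \<ge> 0" using Suc assms by simp
  finally show ?case .
qed

lemma encode_exists:
  "set js \<subseteq> {..<(n::nat)} \<Longrightarrow> \<exists>l < n ^ length js. map (\<lambda>m. (l div n ^ m) mod n) [0..<length js] = js"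
proof (induction js)
  case Nil
  have "(0::nat) < n ^ length ([]::nat list) \<and> map (\<lambda>m. (0 div n ^ m) mod n) [0..<length ([]::nat list)] = []" by simp
  then show ?case by blast
next
  case (Cons j js)
  then obtain l where l: "l < n ^ length js" "map (\<lambda>m. (l div n ^ m) mod n) [0..<length js] = js" by auto
  have jn: "j < n" using Cons by auto
  define l' where "l' = j + n * l"
  have "l' < n ^ length (j#js)"
  proof -
    have "l + 1 \<le> n ^ length js" using l by simp
    hence "n * (l + 1) \<le> n * n ^ length js" by (rule mult_le_mono2)
    thus ?thesis unfolding l'_def using jn by (simp add: algebra_simps)
  qed
  moreover have "l' div n = l" unfolding l'_def using jn by simp
  hence "(\<lambda>m. (l' div n ^ Suc m) mod n) = (\<lambda>m. (l div n ^ m) mod n)"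
    by (simp add: div_mult2_eq power_Suc mult.commute)
  hence "map (\<lambda>m. (l' div n ^ m) mod n) [0..<length (j#js)] = j # js"
    using l jn unfolding l'_def by (simp add: map_upt_Suc del: upt_Suc)
  ultimately show ?case by (intro exI[of _ l'] conjI)
qed

lemma col_bound:
  assumes "js \<in> idx_tuples (k - 1) n"
  shows "(\<Sum>i<n. \<bar>dP (i # js)\<bar>) \<le> mat_norm1 n (n ^ (k - 1)) (unfold1 k n dP)"
proof -
  have len: "length js = k - 1" and st: "set js \<subseteq> {..<n}" using assms unfolding idx_tuples_def by auto
  obtain l where l: "l < n ^ (k-1)" "unfold_col k n l = js"
    using encode_exists[OF st] len unfolding unfold_col_def by auto
  have "(\<Sum>i<n. \<bar>dP (i # js)\<bar>) = (\<lambda>l. \<Sum>i<n. \<bar>unfold1 k n dP i l\<bar>) l"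
    using l by (simp add: unfold1_def)
  also have "\<dots> \<le> mat_norm1 n (n ^ (k - 1)) (unfold1 k n dP)"
    unfolding mat_norm1_def using l by (intro Max_ge) auto
  finally show ?thesis .
qed

lemma lip_aux:
  fixes y yp :: "nat \<Rightarrow> real"
  assumes y0: "\<forall>i<n. y i \<ge> 0" and yp0: "\<forall>i<n. yp i \<ge> 0"
    and s1: "(\<Sum>i<n. y i) \<ge> 1" and sp1: "(\<Sum>i<n. yp i) \<ge> 1"
    and le: "(\<Sum>i<n. y i) \<le> (\<Sum>i<n. yp i)"
  shows "(\<Sum>i<n. \<bar>yp i - y i\<bar>) \<le> (2 * real m + 1) / (real m + 1) *
           (\<Sum>i<n. \<bar>(\<Sum>i<n. yp i) ^ m * yp i - (\<Sum>i<n. y i) ^ m * y i\<bar>)"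
proof -
  define s where "s = (\<Sum>i<n. y i)"
  define sp where "sp = (\<Sum>i<n. yp i)"
  define W where "W = (\<Sum>i<n. \<bar>sp ^ m * yp i - s ^ m * y i\<bar>)"
  define D where "D = (\<Sum>i<n. \<bar>yp i - y i\<bar>)"
  have s0: "s \<ge> 1" "sp \<ge> 1" "s \<le> sp" using s1 sp1 le s_def sp_def by auto
  have am: "s ^ m \<le> sp ^ m" using s0 by (intro power_mono) auto
  have W0: "W \<ge> 0" unfolding W_def by (simp add: sum_nonneg)
  have "sp ^ m * D = (\<Sum>i<n. \<bar>(sp ^ m * yp i - s ^ m * y i) - (sp ^ m - s ^ m) * y i\<bar>)"
    unfolding D_def sum_distrib_left
  proof (intro sum.cong refl)
    fix x
    have e: "(sp ^ m * yp x - s ^ m * y x) - (sp ^ m - s ^ m) * y x = sp ^ m * (yp x - y x)"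
      by (simp add: algebra_simps)
    have "sp ^ m \<ge> 0" using s0 by simp
    then show "sp ^ m * \<bar>yp x - y x\<bar> = \<bar>(sp ^ m * yp x - s ^ m * y x) - (sp ^ m - s ^ m) * y x\<bar>"
      unfolding e by (simp add: abs_mult)
  qed
  also have "\<dots> \<le> (\<Sum>i<n. \<bar>sp ^ m * yp i - s ^ m * y i\<bar> + (sp ^ m - s ^ m) * y i)"
  proof (intro sum_mono)
    fix i assume "i \<in> {..<n}"
    hence "y i \<ge> 0" using y0 by auto
    hence "\<bar>(sp ^ m - s ^ m) * y i\<bar> = (sp ^ m - s ^ m) * y i" using am by simp
    thus "\<bar>(sp ^ m * yp i - s ^ m * y i) - (sp ^ m - s ^ m) * y i\<bar> \<le> \<bar>sp ^ m * yp i - s ^ m * y i\<bar> + (sp ^ m - s ^ m) * y i"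
      by (metis abs_triangle_ineq4)
  qed
  also have "\<dots> = W + (sp ^ m - s ^ m) * s"
    unfolding W_def s_def sum.distrib sum_distrib_left by simp
  finally have 1: "sp ^ m * D \<le> W + (sp ^ m - s ^ m) * s" .
  have "sp ^ Suc m - s ^ Suc m = (\<Sum>i<n. sp ^ m * yp i - s ^ m * y i)"
    by (simp add: sum_subtractf sum_distrib_right[symmetric] s_def sp_def mult.commute)
  also have "\<dots> \<le> W" unfolding W_def by (rule sum_mono) simp
  finally have 2: "sp ^ Suc m - s ^ Suc m \<le> W" .
  have 3: "(real m + 1) * ((sp ^ m - s ^ m) * s) \<le> real m * (sp ^ Suc m - s ^ Suc m)"
    using amgm_aux[of s sp m] s0 by (simp add: algebra_simps)
  have "(real m + 1) * (sp ^ m * D) \<le> (real m + 1) * W + real m * W"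
  proof -
    have a: "(real m + 1) * (sp ^ m * D) \<le> (real m + 1) * (W + (sp ^ m - s ^ m) * s)"
      using 1 by (intro mult_left_mono) auto
    have b: "real m * (sp ^ Suc m - s ^ Suc m) \<le> real m * W"
      using 2 by (intro mult_left_mono) auto
    show ?thesis using a b 3 by (simp add: algebra_simps)
  qed
  hence "(real m + 1) * D \<le> (2 * real m + 1) * W"
  proof -
    assume h: "(real m + 1) * (sp ^ m * D) \<le> (real m + 1) * W + real m * W"
    have "D \<ge> 0" unfolding D_def by (simp add: sum_nonneg)
    moreover have "sp ^ m \<ge> 1" using s0 by simp
    ultimately have "D \<le> sp ^ m * D" by (simp add: mult_le_cancel_right1)
    hence "(real m + 1) * D \<le> (real m + 1) * (sp ^ m * D)" by (intro mult_left_mono) auto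
    with h show ?thesis by (simp add: algebra_simps)
  qed
  hence "D \<le> (2 * real m + 1) / (real m + 1) * W"
    by (simp add: field_simps)
  thus ?thesis unfolding D_def W_def s_def sp_def .
qed

lemma lip:
  fixes y yp :: "nat \<Rightarrow> real"
  assumes y0: "\<forall>i<n. y i \<ge> 0" and yp0: "\<forall>i<n. yp i \<ge> 0"
    and s1: "(\<Sum>i<n. y i) \<ge> 1" and sp1: "(\<Sum>i<n. yp i) \<ge> 1"
  shows "(\<Sum>i<n. \<bar>yp i - y i\<bar>) \<le> (2 * real m + 1) / (real m + 1) *
           (\<Sum>i<n. \<bar>(\<Sum>i<n. yp i) ^ m * yp i - (\<Sum>i<n. y i) ^ m * y i\<bar>)"
proof (cases "(\<Sum>i<n. y i) \<le> (\<Sum>i<n. yp i)")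
  case True then show ?thesis using lip_aux[OF assms] by blast
next
  case False
  hence "(\<Sum>i<n. yp i) \<le> (\<Sum>i<n. y i)" by simp
  from lip_aux[OF yp0 y0 sp1 s1 this, of m] show ?thesis
    by (simp add: abs_minus_commute)
qed

lemma T_add: "tensor_apply k n (tensor_add P Q) u i = tensor_apply k n P u i + tensor_apply k n Q u i"
  unfolding tensor_apply_def tensor_add_def by (simp add: sum.distrib algebra_simps)

lemma T_colsum: "(\<Sum>i<n. tensor_apply k n P u i) =
   (\<Sum>js\<in>idx_tuples (k - 1) n. (\<Sum>i<n. P (i # js)) * (\<Prod>j\<leftarrow>js. u j))"
  unfolding tensor_apply_def by (subst sum.swap) (simp add: sum_distrib_right)

lemma T_dP:
  fixes u :: "nat \<Rightarrow> real"
  assumes u0: "\<forall>i<n. u i \<ge> 0"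
  shows "(\<Sum>i<n. \<bar>tensor_apply k n dP u i\<bar>) \<le> mat_norm1 n (n ^ (k - 1)) (unfold1 k n dP) * (\<Sum>i<n. u i) ^ (k - 1)"
proof -
  define N where "N = mat_norm1 n (n ^ (k - 1)) (unfold1 k n dP)"
  have "(\<Sum>i<n. \<bar>tensor_apply k n dP u i\<bar>) \<le> (\<Sum>i<n. \<Sum>js\<in>idx_tuples (k - 1) n. \<bar>dP (i # js)\<bar> * (\<Prod>j\<leftarrow>js. u j))"
    unfolding tensor_apply_def
  proof (intro sum_mono)
    fix i
    have "\<bar>\<Sum>js\<in>idx_tuples (k - 1) n. dP (i # js) * (\<Prod>j\<leftarrow>js. u j)\<bar> \<le> (\<Sum>js\<in>idx_tuples (k - 1) n. \<bar>dP (i # js) * (\<Prod>j\<leftarrow>js. u j)\<bar>)"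
      by (rule sum_abs)
    also have "\<dots> = (\<Sum>js\<in>idx_tuples (k - 1) n. \<bar>dP (i # js)\<bar> * (\<Prod>j\<leftarrow>js. u j))"
      using prod_nonneg_tuples[OF u0] by (intro sum.cong refl) (simp add: abs_mult)
    finally show "\<bar>\<Sum>js\<in>idx_tuples (k - 1) n. dP (i # js) * (\<Prod>j\<leftarrow>js. u j)\<bar> \<le> (\<Sum>js\<in>idx_tuples (k - 1) n. \<bar>dP (i # js)\<bar> * (\<Prod>j\<leftarrow>js. u j))" .
  qed
  also have "\<dots> = (\<Sum>js\<in>idx_tuples (k - 1) n. (\<Sum>i<n. \<bar>dP (i # js)\<bar>) * (\<Prod>j\<leftarrow>js. u j))"
    by (subst sum.swap) (simp add: sum_distrib_right)
  also have "\<dots> \<le> (\<Sum>js\<in>idx_tuples (k - 1) n. N * (\<Prod>j\<leftarrow>js. u j))"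
    using prod_nonneg_tuples[OF u0] col_bound unfolding N_def
    by (intro sum_mono mult_right_mono) auto
  also have "\<dots> = N * (\<Sum>i<n. u i) ^ (k - 1)"
    by (simp add: sum_distrib_left[symmetric] sum_prod_tuples)
  finally show ?thesis unfolding N_def .
qed

lemma T_Pdiff:
  fixes u v :: "nat \<Rightarrow> real"
  assumes hP: "colwise_substochastic k n P" and k2: "k \<ge> 2"
    and u0: "\<forall>i<n. u i \<ge> 0" and v0: "\<forall>i<n. v i \<ge> 0"
    and su: "(\<Sum>i<n. u i) \<le> B" and sv: "(\<Sum>i<n. v i) \<le> B"
  shows "(\<Sum>i<n. \<bar>tensor_apply k n P u i - tensor_apply k n P v i\<bar>) \<le> real (k - 1) * B ^ (k - 2) * (\<Sum>i<n. \<bar>u i - v i\<bar>)"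
proof -
  define X where "X = (\<lambda>js. (\<Prod>j\<leftarrow>js. u j) - (\<Prod>j\<leftarrow>js. v j))"
  have "(\<Sum>i<n. \<bar>tensor_apply k n P u i - tensor_apply k n P v i\<bar>) \<le> (\<Sum>i<n. \<Sum>js\<in>idx_tuples (k - 1) n. P (i # js) * \<bar>X js\<bar>)"
    unfolding tensor_apply_def
  proof (intro sum_mono)
    fix i assume i: "i \<in> {..<n}"
    have "(\<Sum>js\<in>idx_tuples (k - 1) n. P (i # js) * (\<Prod>j\<leftarrow>js. u j)) - (\<Sum>js\<in>idx_tuples (k - 1) n. P (i # js) * (\<Prod>j\<leftarrow>js. v j))
       = (\<Sum>js\<in>idx_tuples (k - 1) n. P (i # js) * X js)"
      unfolding X_def by (simp add: sum_subtractf algebra_simps)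
    also have "\<bar>\<dots>\<bar> \<le> (\<Sum>js\<in>idx_tuples (k - 1) n. \<bar>P (i # js) * X js\<bar>)" by (rule sum_abs)
    also have "\<dots> = (\<Sum>js\<in>idx_tuples (k - 1) n. P (i # js) * \<bar>X js\<bar>)"
      using hP i unfolding colwise_substochastic_def by (intro sum.cong refl) (simp add: abs_mult)
    finally show "\<bar>(\<Sum>js\<in>idx_tuples (k - 1) n. P (i # js) * (\<Prod>j\<leftarrow>js. u j)) - (\<Sum>js\<in>idx_tuples (k - 1) n. P (i # js) * (\<Prod>j\<leftarrow>js. v j))\<bar>
       \<le> (\<Sum>js\<in>idx_tuples (k - 1) n. P (i # js) * \<bar>X js\<bar>)" .
  qed
  also have "\<dots> = (\<Sum>js\<in>idx_tuples (k - 1) n. (\<Sum>i<n. P (i # js)) * \<bar>X js\<bar>)"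
    by (subst sum.swap) (simp add: sum_distrib_right)
  also have "\<dots> \<le> (\<Sum>js\<in>idx_tuples (k - 1) n. \<bar>X js\<bar>)"
    using hP unfolding colwise_substochastic_def
  proof (intro sum_mono)
    fix js assume "js \<in> idx_tuples (k - 1) n"
    hence "(\<Sum>i<n. P (i # js)) \<le> 1" using hP unfolding colwise_substochastic_def by blast
    from mult_right_mono[OF this abs_ge_zero[of "X js"]]
    show "(\<Sum>i<n. P (i # js)) * \<bar>X js\<bar> \<le> \<bar>X js\<bar>" by simp
  qed
  also have "\<dots> \<le> real (k - 1) * B ^ (k - 2) * (\<Sum>i<n. \<bar>u i - v i\<bar>)"
  proof -
    obtain L where L: "k - 1 = Suc L" "k - 2 = L" using k2 by (intro that[of "k - 2"]) auto
    show ?thesis unfolding L X_def using diff_tuples[OF u0 v0 su sv, of L] by simp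
  qed
  finally show ?thesis .
qed

theorem theorem3p12:
  fixes k n :: nat and P dP :: tensor and v dv y dy :: vec and \<alpha> :: real
  assumes hk: "k \<ge> 2" and hn: "n \<ge> 1"
    and hP: "colwise_substochastic k n P"
    and hPp: "colwise_substochastic k n (tensor_add P dP)"
    and hv: "stochastic_vec n v"
    and hvp: "stochastic_vec n (\<lambda>i. v i + dv i)"
    and ha0: "0 \<le> \<alpha>" and ha1: "\<alpha> < 1"
    and hvs: "(2 * real k - 3) * \<alpha> * (1 - \<alpha>) powr (- ((real k - 2) / (real k - 1))) < 1"
    and hy: "(\<forall>i<n. y i \<ge> 0) \<and> esum n y \<le> (1 - \<alpha>) powr (- (1 / (real k - 1)))"
    and hyp: "(\<forall>i<n. y i + dy i \<ge> 0) \<and>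
              esum n (\<lambda>i. y i + dy i) \<le> (1 - \<alpha>) powr (- (1 / (real k - 1)))"
    and heq: "\<forall>i<n. esum n y ^ (k - 2) * y i - \<alpha> * tensor_apply k n P y i = v i"
    and heqp: "\<forall>i<n. esum n (\<lambda>j. y j + dy j) ^ (k - 2) * (y i + dy i)
                 - \<alpha> * tensor_apply k n (tensor_add P dP) (\<lambda>j. y j + dy j) i = v i + dv i"
  shows "let \<sigma> = (2 * real k - 3) * \<alpha> * (1 - \<alpha>) powr (- ((real k - 2) / (real k - 1)))
         in vnorm1 n dy \<le> (2 * real k - 3) / ((real k - 1) * (1 - \<sigma>)) *
              (\<alpha> / (1 - \<alpha>) * mat_norm1 n (n ^ (k - 1)) (unfold1 k n dP) + vnorm1 n dv)"
proof -
  obtain m where km: "k = m + 2" using hk by (metis add.commute le_Suc_ex)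
  have k1: "k - 1 = Suc m" "k - 2 = m" "real k - 1 = real m + 1" "real k - 2 = real m"
     "2 * real k - 3 = 2 * real m + 1" using km by auto
  define yp where "yp = (\<lambda>i. y i + dy i)"
  define s where "s = (\<Sum>i<n. y i)"
  define sp where "sp = (\<Sum>i<n. yp i)"
  define N where "N = mat_norm1 n (n ^ (k - 1)) (unfold1 k n dP)"
  define M where "M = (1 - \<alpha>) powr (- (1 / (real m + 1)))"
  define \<sigma> where "\<sigma> = (2 * real m + 1) * \<alpha> * M ^ m"
  have a1: "1 - \<alpha> > 0" using ha1 by simp
  have M0: "M > 0" unfolding M_def using a1 by simp
  have MSuc: "M ^ Suc m = 1 / (1 - \<alpha>)"
  proof -
    have "M ^ Suc m = M powr real (Suc m)" by (rule powr_realpow[OF M0, symmetric])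
    also have "\<dots> = (1 - \<alpha>) powr (- (1 / (real m + 1)) * real (Suc m))" unfolding M_def by (simp add: powr_powr)
    also have "- (1 / (real m + 1)) * real (Suc m) = - 1" by (simp add: field_simps)
    also have "(1 - \<alpha>) powr (- 1) = inverse (1 - \<alpha>)" using a1 by (simp add: powr_minus)
    also have "\<dots> = 1 / (1 - \<alpha>)" by (simp add: divide_inverse)
    finally show ?thesis .
  qed
  have Mm: "M ^ m = (1 - \<alpha>) powr (- ((real k - 2) / (real k - 1)))"
  proof -
    have "M ^ m = M powr real m" by (rule powr_realpow[OF M0, symmetric])
    also have "\<dots> = (1 - \<alpha>) powr (- (1 / (real m + 1)) * real m)" unfolding M_def by (simp add: powr_powr)
    also have "\<dots> = (1 - \<alpha>) powr (- ((real k - 2) / (real k - 1)))" unfolding k1 by simp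
    finally show ?thesis .
  qed
  have sig: "\<sigma> < 1" using hvs unfolding \<sigma>_def Mm k1 .
  have y0: "\<forall>i<n. y i \<ge> 0" and yp0: "\<forall>i<n. yp i \<ge> 0" using hy hyp unfolding yp_def by auto
  have sM: "s \<le> M" and spM: "sp \<le> M" using hy hyp unfolding s_def sp_def yp_def M_def esum_def k1 by auto
  have s0: "s \<ge> 0" and sp0: "sp \<ge> 0" unfolding s_def sp_def using y0 yp0 by (auto intro: sum_nonneg)
  have ge1: "(\<Sum>i<n. u i) \<ge> 1"
    if u0: "\<forall>i<n. u i \<ge> 0" and Q: "colwise_substochastic k n Q"
      and e: "\<forall>i<n. (\<Sum>i<n. u i) ^ m * u i - \<alpha> * tensor_apply k n Q u i = w i"
      and w: "stochastic_vec n w" for u Q w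
  proof (rule ccontr)
    assume "\<not> ?thesis"
    hence lt: "(\<Sum>i<n. u i) < 1" by simp
    have su0: "(\<Sum>i<n. u i) \<ge> 0" using u0 by (auto intro: sum_nonneg)
    have "1 = (\<Sum>i<n. w i)" using w unfolding stochastic_vec_def by simp
    also have "\<dots> = (\<Sum>i<n. (\<Sum>i<n. u i) ^ m * u i - \<alpha> * tensor_apply k n Q u i)" using e by simp
    also have "\<dots> = (\<Sum>i<n. u i) ^ Suc m - \<alpha> * (\<Sum>i<n. tensor_apply k n Q u i)"
      by (simp add: sum_subtractf sum_distrib_left[symmetric])
    also have "(\<Sum>i<n. tensor_apply k n Q u i) \<ge> 0"
      unfolding T_colsum using Q prod_nonneg_tuples[OF u0] unfolding colwise_substochastic_def
      by (intro sum_nonneg mult_nonneg_nonneg) auto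
    hence "(\<Sum>i<n. u i) ^ Suc m - \<alpha> * (\<Sum>i<n. tensor_apply k n Q u i) \<le> (\<Sum>i<n. u i) ^ Suc m"
      using ha0 by simp
    also have "(\<Sum>i<n. u i) ^ Suc m < 1 ^ Suc m" by (rule power_strict_mono[OF lt su0]) simp
    finally show False by simp
  qed
  have s1: "s \<ge> 1" unfolding s_def
    by (rule ge1[OF y0 hP _ hv]) (use heq in \<open>simp add: esum_def k1\<close>)
  have sp1: "sp \<ge> 1" unfolding sp_def
    by (rule ge1[OF yp0 hPp _ hvp]) (use heqp in \<open>simp add: esum_def k1 yp_def\<close>)
  have dw: "sp ^ m * yp i - s ^ m * y i = dv i + \<alpha> * (tensor_apply k n dP yp i +
      (tensor_apply k n P yp i - tensor_apply k n P y i))" if i: "i < n" for i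
  proof -
    have 1: "s ^ m * y i - \<alpha> * tensor_apply k n P y i = v i" using heq i unfolding s_def esum_def k1 by simp
    have 2: "sp ^ m * yp i - \<alpha> * (tensor_apply k n P yp i + tensor_apply k n dP yp i) = v i + dv i"
      using heqp i unfolding sp_def esum_def k1 yp_def T_add by simp
    show ?thesis using 1 2 by (simp add: algebra_simps)
  qed
  define W where "W = (\<Sum>i<n. \<bar>sp ^ m * yp i - s ^ m * y i\<bar>)"
  define D where "D = vnorm1 n dy"
  have Dyp: "D = (\<Sum>i<n. \<bar>yp i - y i\<bar>)" unfolding D_def vnorm1_def yp_def by simp
  have N0: "N \<ge> 0"
  proof -
    have "0 < n ^ (k - 1)" using hn by simp
    hence "(\<lambda>l. \<Sum>i<n. \<bar>unfold1 k n dP i l\<bar>) 0 \<le> N" unfolding N_def mat_norm1_def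
      by (intro Max_ge) auto
    moreover have "(\<lambda>l. \<Sum>i<n. \<bar>unfold1 k n dP i l\<bar>) 0 \<ge> 0" by (simp add: sum_nonneg)
    ultimately show ?thesis by linarith
  qed
  have TdP: "(\<Sum>i<n. \<bar>tensor_apply k n dP yp i\<bar>) \<le> N / (1 - \<alpha>)"
  proof -
    have "(\<Sum>i<n. \<bar>tensor_apply k n dP yp i\<bar>) \<le> N * sp ^ Suc m"
      using T_dP[OF yp0, of k dP] unfolding N_def sp_def k1 .
    also have "\<dots> \<le> N * M ^ Suc m" using N0 sp0 spM by (intro mult_left_mono power_mono) auto
    finally show ?thesis unfolding MSuc by simp
  qed
  have TPd: "(\<Sum>i<n. \<bar>tensor_apply k n P yp i - tensor_apply k n P y i\<bar>) \<le> (real m + 1) * M ^ m * D"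
    using T_Pdiff[OF hP hk yp0 y0, of M] spM sM unfolding sp_def s_def k1 Dyp by (simp add: add.commute)
  have WB: "W \<le> vnorm1 n dv + \<alpha> * (N / (1 - \<alpha>) + (real m + 1) * M ^ m * D)"
  proof -
    have "W \<le> (\<Sum>i<n. \<bar>dv i\<bar> + \<alpha> * (\<bar>tensor_apply k n dP yp i\<bar> + \<bar>tensor_apply k n P yp i - tensor_apply k n P y i\<bar>))"
      unfolding W_def
    proof (intro sum_mono)
      fix i assume "i \<in> {..<n}"
      hence e: "sp ^ m * yp i - s ^ m * y i = dv i + \<alpha> * (tensor_apply k n dP yp i +
        (tensor_apply k n P yp i - tensor_apply k n P y i))" using dw by simp
      show "\<bar>sp ^ m * yp i - s ^ m * y i\<bar> \<le> \<bar>dv i\<bar> + \<alpha> * (\<bar>tensor_apply k n dP yp i\<bar> + \<bar>tensor_apply k n P yp i - tensor_apply k n P y i\<bar>)"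
      proof -
        define a where "a = tensor_apply k n dP yp i"
        define b where "b = tensor_apply k n P yp i - tensor_apply k n P y i"
        have "\<bar>\<alpha> * (a + b)\<bar> = \<alpha> * \<bar>a + b\<bar>" using ha0 by (simp add: abs_mult)
        also have "\<dots> \<le> \<alpha> * (\<bar>a\<bar> + \<bar>b\<bar>)" using ha0 by (intro mult_left_mono abs_triangle_ineq)
        finally have "\<bar>\<alpha> * (a + b)\<bar> \<le> \<alpha> * (\<bar>a\<bar> + \<bar>b\<bar>)" .
        moreover have "\<bar>dv i + \<alpha> * (a + b)\<bar> \<le> \<bar>dv i\<bar> + \<bar>\<alpha> * (a + b)\<bar>" by (rule abs_triangle_ineq)
        ultimately show ?thesis unfolding e a_def[symmetric] b_def[symmetric] by linarith
      qed
    qed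
    also have "\<dots> = vnorm1 n dv + \<alpha> * ((\<Sum>i<n. \<bar>tensor_apply k n dP yp i\<bar>) + (\<Sum>i<n. \<bar>tensor_apply k n P yp i - tensor_apply k n P y i\<bar>))"
      unfolding vnorm1_def by (simp add: sum_distrib_left[symmetric] sum.distrib)
    also have "\<dots> \<le> vnorm1 n dv + \<alpha> * (N / (1 - \<alpha>) + (real m + 1) * M ^ m * D)"
      using TdP TPd ha0 by (intro add_left_mono mult_left_mono add_mono) auto
    finally show ?thesis .
  qed
  have DW: "D \<le> (2 * real m + 1) / (real m + 1) * W"
    using lip[OF y0 yp0 _ _, of m] s1 sp1 unfolding Dyp W_def s_def sp_def by simp
  define c where "c = (2 * real m + 1) / (real m + 1)"
  have c0: "c \<ge> 0" unfolding c_def by simp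
  have "D \<le> c * (vnorm1 n dv + \<alpha> * (N / (1 - \<alpha>) + (real m + 1) * M ^ m * D))"
    using DW mult_left_mono[OF WB c0] unfolding c_def[symmetric] by linarith
  also have "\<dots> = c * (\<alpha> / (1 - \<alpha>) * N + vnorm1 n dv) + \<sigma> * D"
    unfolding \<sigma>_def c_def by (simp add: field_simps)
  finally have "D * (1 - \<sigma>) \<le> c * (\<alpha> / (1 - \<alpha>) * N + vnorm1 n dv)" by (simp add: algebra_simps)
  hence "D \<le> c * (\<alpha> / (1 - \<alpha>) * N + vnorm1 n dv) / (1 - \<sigma>)" using sig by (simp add: field_simps)
  also have "\<dots> = (2 * real m + 1) / ((real m + 1) * (1 - \<sigma>)) * (\<alpha> / (1 - \<alpha>) * N + vnorm1 n dv)"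
    unfolding c_def by (simp add: field_simps)
  finally have fin: "D \<le> (2 * real m + 1) / ((real m + 1) * (1 - \<sigma>)) * (\<alpha> / (1 - \<alpha>) * N + vnorm1 n dv)" .
  have Mm': "M ^ m = (1 - \<alpha>) powr (- (real m / (real m + 1)))" using Mm unfolding k1 .
  show ?thesis using fin unfolding Let_def k1 \<sigma>_def D_def N_def Mm' .
qed

end
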